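(* Let $n,k\ge 0$ be integers with $n\ge 2k$. For every $\alpha\in F_n(2,k)$ with $\alpha\ne\gamma_{n,k}$, the last word of the list $\mathcal{F}(\alpha)$ is $\gamma_{n,k}=0^{n-2k}(01)^k$.
   Context: The weight of a binary word is its number of 1's. $F_n(2,k)$ is the set of binary words of length $n$ and weight $k$ containing no two consecutive 1's. $\gamma_{n,k}=0^{n-2k}(01)^k$. A homogeneous transposition of a binary word exchanges a 1 and a 0 such that no 1 occurs strictly between the two exchanged positions. For a set $S$ of binary words of the same length and weight and $\alpha\in S$, the list obtained by applying the greedy algorithm for $S$ to $\alpha$ is built as follows: start with the list $(\alpha)$; repeatedly, for the last word $w$ of the current list, among all words obtainable from $w$ by one homogeneous transposition that lie in $S$ and do not already occur in the list, choose the one obtained by transposing the leftmost possible 1 with (among transpositions of that 1) the leftmost possible 0, and append it; stop when no such word exists. $\mathcal{F}(\alpha)$ denotes the list obtained by applying the greedy algorithm for $F_n(2,k)$ to $\alpha\in F_n(2,k)$. *)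

theory Defs
  imports Main
begin

text \<open>Binary words are boolean lists; True stands for the letter 1, False for 0.\<close>

definition weight :: "bool list \<Rightarrow> nat" where
  "weight w = count_list w True"

definition Fib_words :: "nat \<Rightarrow> nat \<Rightarrow> bool list set" where
  "Fib_words n k = {w. length w = n \<and> weight w = k \<and>
      (\<forall>i. Suc i < length w \<longrightarrow> \<not> (w ! i \<and> w ! Suc i))}"

definition gamma :: "nat \<Rightarrow> nat \<Rightarrow> bool list" where
  "gamma n k = replicate (n - 2 * k) False @ concat (replicate k [False, True])"

definition swap_pos :: "bool list \<Rightarrow> nat \<Rightarrow> nat \<Rightarrow> bool list" where
  "swap_pos w i j = w[i := w ! j, j := w ! i]"

definition homog_transp :: "bool list \<Rightarrow> nat \<Rightarrow> nat \<Rightarrow> bool" where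
  "homog_transp w i j \<longleftrightarrow> i < length w \<and> j < length w \<and> w ! i \<and> \<not> w ! j \<and>
      (\<forall>m. min i j < m \<and> m < max i j \<longrightarrow> \<not> w ! m)"

definition greedy_cands :: "bool list set \<Rightarrow> bool list list \<Rightarrow> (nat \<times> nat) set" where
  "greedy_cands S L = {(i, j). homog_transp (last L) i j \<and>
      swap_pos (last L) i j \<in> S \<and> swap_pos (last L) i j \<notin> set L}"

definition greedy_next :: "bool list set \<Rightarrow> bool list list \<Rightarrow> bool list option" where
  "greedy_next S L =
     (if greedy_cands S L = {} then None
      else (let i0 = (LEAST i. \<exists>j. (i, j) \<in> greedy_cands S L);
                j0 = (LEAST j. (i0, j) \<in> greedy_cands S L)
            in Some (swap_pos (last L) i0 j0)))"

fun greedy_aux :: "nat \<Rightarrow> bool list set \<Rightarrow> bool list list \<Rightarrow> bool list list" where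
  "greedy_aux 0 S L = L"
| "greedy_aux (Suc f) S L =
     (case greedy_next S L of None \<Rightarrow> L | Some w \<Rightarrow> greedy_aux f S (L @ [w]))"

text \<open>Every step appends a new element of S, so at most card S - 1 steps occur; the fuel
  card S therefore suffices for the algorithm to stop on its own.\<close>
definition greedy :: "bool list set \<Rightarrow> bool list \<Rightarrow> bool list list" where
  "greedy S \<alpha> = greedy_aux (card S) S [\<alpha>]"

definition F_list :: "nat \<Rightarrow> nat \<Rightarrow> bool list \<Rightarrow> bool list list" where
  "F_list n k \<alpha> = greedy (Fib_words n k) \<alpha>"

end

theory Submission
  imports Defs "HOL-Library.Multiset"
begin


definition blk :: "nat \<Rightarrow> bool list" where "blk t = concat (replicate t [False, True])"

lemma blk_Suc: "blk (Suc t) = False # True # blk t" by (simp add: blk_def)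
lemma blk_0[simp]: "blk 0 = []" by (simp add: blk_def)
lemma length_blk[simp]: "length (blk t) = 2*t" by (induction t) (auto simp: blk_Suc)
lemma blk_nth: "y < 2*t \<Longrightarrow> blk t ! y = odd y"
proof (induction t arbitrary: y)
  case 0 then show ?case by simp
next
  case (Suc t)
  show ?case
  proof (cases y)
    case 0 then show ?thesis by (simp add: blk_Suc)
  next
    case (Suc y')
    show ?thesis
    proof (cases y')
      case 0 then show ?thesis using Suc by (simp add: blk_Suc)
    next
      case (Suc z)
      then show ?thesis using \<open>y = Suc y'\<close> Suc.prems Suc.IH[of z] by (simp add: blk_Suc)
    qed
  qed
qed
lemma weight_blk: "weight (blk t) = t" by (induction t) (auto simp: blk_Suc weight_def)

fun trc :: "bool list \<Rightarrow> nat" where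
  "trc (True # False # xs) = Suc (trc xs)"
| "trc _ = 0"

definition tr :: "bool list \<Rightarrow> nat" where "tr w = trc (rev w)"

lemma rev_blk: "rev (blk t) = concat (replicate t [True, False])"
  by (induction t) (simp_all add: blk_Suc replicate_append_same[symmetric])

lemma trc_app: "trc (concat (replicate t [True,False]) @ xs) = t + trc xs"
  by (induction t) auto

lemma tr_app_blk: "tr (v @ blk t) = t + tr v"
  unfolding tr_def by (simp add: rev_blk trc_app)

lemma trc_decomp: "\<exists>ys. xs = concat (replicate (trc xs) [True,False]) @ ys \<and> trc ys = 0"
  by (induction xs rule: trc.induct) auto

lemma tr_decomp: "\<exists>v. w = v @ blk (tr w) \<and> tr v = 0"
proof -
  obtain ys where ys: "rev w = concat (replicate (trc (rev w)) [True,False]) @ ys" "trc ys = 0"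
    using trc_decomp by blast
  have "w = rev ys @ rev (concat (replicate (trc (rev w)) [True,False]))"
    by (metis ys(1) rev_append rev_rev_ident)
  also have "rev (concat (replicate (trc (rev w)) [True,False])) = blk (tr w)"
    by (metis rev_blk rev_rev_ident tr_def)
  finally show ?thesis using ys(2) by (auto simp: tr_def)
qed

lemma tr0_end: "tr v = 0 \<Longrightarrow> v \<noteq> x @ [False, True]"
  by (auto simp: tr_def)

lemma length_swap[simp]: "length (swap_pos w i j) = length w"
  by (simp add: swap_pos_def)

lemma swap_nth: "i < length w \<Longrightarrow> j < length w \<Longrightarrow> x < length w \<Longrightarrow>
   swap_pos w i j ! x = (if x = j then w!i else if x = i then w!j else w!x)"
  by (simp add: swap_pos_def nth_list_update)

lemma weight_swap: "i < length w \<Longrightarrow> j < length w \<Longrightarrow> weight (swap_pos w i j) = weight w"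
  unfolding weight_def swap_pos_def
  by (metis count_mset mset_swap)

lemma swap_append: "i < length a \<Longrightarrow> j < length a \<Longrightarrow> swap_pos (a @ b) i j = swap_pos a i j @ b"
  by (simp add: swap_pos_def nth_append list_update_append)

lemma gamma_blk: "gamma n k = replicate (n - 2*k) False @ blk k"
  by (simp add: gamma_def blk_def)

lemma gamma_nth: "2*k \<le> n \<Longrightarrow> x < n \<Longrightarrow> gamma n k ! x = (n - 2*k \<le> x \<and> odd (x - (n - 2*k)))"
  by (auto simp: gamma_blk nth_append blk_nth)

lemma length_gamma: "2*k \<le> n \<Longrightarrow> length (gamma n k) = n"
  by (simp add: gamma_blk)

lemma FibD: "w \<in> Fib_words n k \<Longrightarrow> length w = n \<and> weight w = k \<and> (\<forall>i. Suc i < n \<longrightarrow> \<not> (w ! i \<and> w ! Suc i))"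
  by (auto simp: Fib_words_def)

lemma FibI: "length w = n \<Longrightarrow> weight w = k \<Longrightarrow> (\<And>i. Suc i < n \<Longrightarrow> \<not> (w ! i \<and> w ! Suc i)) \<Longrightarrow> w \<in> Fib_words n k"
  by (auto simp: Fib_words_def)

lemma finite_Fib: "finite (Fib_words n k)"
proof -
  have "Fib_words n k \<subseteq> {w. length w = n}" by (auto simp: Fib_words_def)
  moreover have "finite {w :: bool list. length w = n}" using finite_lists_length_eq[of "UNIV::bool set" n] by simp
  ultimately show ?thesis by (rule finite_subset)
qed



lemma up_exists:
  assumes nk: "2*k \<le> n" and wS: "w \<in> Fib_words n k" and wg: "w \<noteq> gamma n k"
  shows "\<exists>i q. homog_transp w i q \<and> swap_pos w i q \<in> Fib_words n k \<and> tr w < tr (swap_pos w i q) \<and>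
     (\<forall>i0 j0. homog_transp w i0 j0 \<and> swap_pos w i0 j0 \<in> Fib_words n k \<and> i0 \<le> i \<longrightarrow> tr w \<le> tr (swap_pos w i0 j0))"
proof -
  define T where "T = tr w"
  obtain v where w: "w = v @ blk T" and v0: "tr v = 0" using tr_decomp T_def by blast
  have ln: "length w = n" and fib: "\<forall>i. Suc i < n \<longrightarrow> \<not>(w!i \<and> w!Suc i)" using FibD[OF wS] by auto
  have len: "length v + 2*T = n" using ln w by simp
  have wt: "weight v + T = k" using FibD[OF wS] w weight_blk[of T] by (simp add: weight_def)
  have "True \<in> set v"
  proof (rule ccontr)
    assume nt: "True \<notin> set v"
    then have "weight v = 0" by (simp add: weight_def)
    hence T: "T = k" using wt by simp
    have "replicate (length v) False = v" using nt by (metis (full_types) replicate_length_same)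
    then have "w = gamma n k" using w T len by (metis gamma_blk add_diff_cancel_right')
    with wg show False ..
  qed
  then obtain v1 zs where v: "v = v1 @ True # zs" and zs: "True \<notin> set zs" using split_list_last by metis
  define r where "r = length zs"
  have zsr: "zs = replicate r False" using zs r_def by (metis (full_types) replicate_length_same)
  have r1: "r \<ge> 1"
  proof (rule ccontr)
    assume "\<not> r \<ge> 1" then have zn: "zs = []" using r_def by (cases zs) auto
    show False
    proof (cases v1 rule: rev_cases)
      case Nil
      then have "v = [True]" using v zn by simp
      then have "weight v = 1" by (simp add: weight_def)
      then show False using len wt nk \<open>v = [True]\<close> by simp
    next
      case (snoc y x)
      show False
      proof (cases x)
        case True
        have "w ! length y \<and> w ! Suc (length y)" using w v snoc True zn by (simp add: nth_append)
        moreover have "Suc (length y) < n" using len v snoc by simp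
        ultimately show False using fib by blast
      next
        case False
        then have "v = y @ [False, True]" using v snoc zn by simp
        then show False using tr0_end[OF v0] by blast
      qed
    qed
  qed
  define i where "i = length v1"
  define q where "q = length v1 + r"
  have lv: "length v = i + 1 + r" using v i_def r_def by simp
  have wnth: "\<forall>x<n. w ! x = (if x < i then v1 ! x else if x = i then True else if x < length v then False else odd (x - length v))"
  proof (intro allI impI)
    fix x assume "x < n"
    then show "w ! x = (if x < i then v1 ! x else if x = i then True else if x < length v then False else odd (x - length v))"
      using w v zsr len i_def lv by (auto simp: nth_append blk_nth)
  qed
  have iq: "i < q" "q < length v" "i < n" "q < n" using r1 lv len unfolding q_def i_def by auto
  have wi: "w ! i" using wnth iq by simp
  have wq: "\<not> w ! q" using wnth iq by simp
  have h: "homog_transp w i q"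
    unfolding homog_transp_def using iq wnth ln wi wq by auto
  define w' where "w' = swap_pos w i q"
  have w'nth: "\<forall>x<n. w'!x = (if x = q then True else if x = i then False else w!x)"
    using swap_nth[of i w q] iq ln wi wq unfolding w'_def by auto
  have w'S: "w' \<in> Fib_words n k"
  proof (rule FibI)
    show "length w' = n" using ln w'_def by simp
    show "weight w' = k" using weight_swap[of i w q] iq ln FibD[OF wS] w'_def by simp
    fix x assume x: "Suc x < n"
    show "\<not>(w'!x \<and> w'!Suc x)"
    proof -
      have A: "w'!x = (if x = q then True else if x = i then False else w!x)" using w'nth x by simp
      have B: "w'!Suc x = (if Suc x = q then True else if Suc x = i then False else w!Suc x)" using w'nth x by simp
      consider "x = q" | "Suc x = q" | "x = i" | "Suc x = i" | "x \<noteq> q \<and> Suc x \<noteq> q \<and> x \<noteq> i \<and> Suc x \<noteq> i" by blast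
      then show ?thesis
      proof cases
        case 1
        then have "\<not> w ! Suc x" using wnth x iq lv by (auto simp: q_def)
        then show ?thesis using A B 1 iq by auto
      next
        case 2
        then have "x = i \<or> \<not> w ! x" using wnth x iq lv by (auto simp: q_def)
        then show ?thesis using A B 2 iq by auto
      next
        case 3 then show ?thesis using A iq by auto
      next
        case 4 then show ?thesis using B iq by auto
      next
        case 5 then show ?thesis using A B fib x by auto
      qed
    qed
  qed
  have w'eq: "w' = (v1 @ replicate (r-1) False) @ blk (Suc T)"
  proof (rule nth_equalityI)
    show "length w' = length ((v1 @ replicate (r-1) False) @ blk (Suc T))"
      using w'_def ln len lv r1 i_def by simp
    fix x assume "x < length w'"
    then have x: "x < n" using w'_def ln by simp
    have L: "length (v1 @ replicate (r-1) False) = q - 1" using q_def r1 by simp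
    have e: "((v1 @ replicate (r-1) False) @ blk (Suc T)) ! x =
       (if x < i then v1 ! x else if x < q - 1 then False else odd (x - (q - 1)))"
      using x L len lv r1 i_def q_def by (auto simp: nth_append blk_nth)
    have w'x: "w'!x = (if x = q then True else if x = i then False else w!x)" using w'nth x by simp
    have wx: "w ! x = (if x < i then v1 ! x else if x = i then True else if x < length v then False else odd (x - length v))"
      using wnth x by simp
    have "x < i \<or> x = i \<or> (i < x \<and> x < q) \<or> x = q \<or> q < x" by arith
    then show "w' ! x = ((v1 @ replicate (r-1) False) @ blk (Suc T)) ! x"
    proof (elim disjE)
      assume "q < x"
      moreover have "x - (q - 1) = (x - length v) + 2" using \<open>q < x\<close> lv r1 q_def i_def by arith
      ultimately show ?thesis unfolding e w'x wx using iq lv q_def i_def by auto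
    qed (unfold e w'x wx, insert iq lv r1 q_def i_def, auto)
  qed
  have trw': "tr w < tr w'" unfolding w'eq tr_app_blk using T_def by simp
  have rest: "\<forall>i0 j0. homog_transp w i0 j0 \<and> swap_pos w i0 j0 \<in> Fib_words n k \<and> i0 \<le> i \<longrightarrow> tr w \<le> tr (swap_pos w i0 j0)"
  proof (intro allI impI)
    fix i0 j0 assume a: "homog_transp w i0 j0 \<and> swap_pos w i0 j0 \<in> Fib_words n k \<and> i0 \<le> i"
    have hh: "i0 < n" "j0 < n" "w ! i0" "\<not> w ! j0" "\<forall>m. min i0 j0 < m \<and> m < max i0 j0 \<longrightarrow> \<not> w ! m"
      using a ln unfolding homog_transp_def by auto
    have j0: "j0 < length v"
    proof (rule ccontr)
      assume "\<not> j0 < length v"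
      then have jv: "length v \<le> j0" by simp
      have mm: "min i0 j0 = i0" "max i0 j0 = j0" using a jv lv by auto
      have "i0 = i"
      proof (rule ccontr)
        assume "i0 \<noteq> i" then have "i0 < i" using a by simp
        then show False using hh(5) mm wi iq jv lv by auto
      qed
      have jeq: "j0 = length v"
      proof (rule ccontr)
        assume "j0 \<noteq> length v"
        then have "Suc (length v) \<le> j0" using jv by simp
        moreover have "w ! Suc (length v)" if "Suc (length v) < n" using wnth that lv by simp
        ultimately have ws: "w ! Suc (length v)" and sl: "Suc (length v) \<le> j0" using hh(2) by auto
        show False
        proof (cases "j0 = Suc (length v)")
          case True then show False using ws hh(4) by simp
        next
          case False
          then have "min i0 j0 < Suc (length v) \<and> Suc (length v) < max i0 j0"
            using sl mm \<open>i0 = i\<close> iq by simp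
          then show False using hh(5) ws by blast
        qed
      qed
      have sn: "Suc (length v) < n" using jeq hh(2) len by presburger
      have s1: "swap_pos w i0 j0 ! length v" using swap_nth[of i0 w j0 "length v"] hh ln jeq by simp
      have s2: "swap_pos w i0 j0 ! Suc (length v)"
        using swap_nth[of i0 w j0 "Suc (length v)"] hh ln jeq sn wnth \<open>i0 = i\<close> iq by simp
      show False using FibD[of "swap_pos w i0 j0" n k] a s1 s2 sn by blast
    qed
    have i0v: "i0 < length v" using a iq by simp
    have "swap_pos w i0 j0 = swap_pos v i0 j0 @ blk T" using swap_append[OF i0v j0] w by simp
    then show "tr w \<le> tr (swap_pos w i0 j0)" using T_def by (simp add: tr_app_blk)
  qed
  show ?thesis using h w'S trw' rest unfolding w'_def by blast
qed



lemma gamma_end: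
  assumes nk: "2*k \<le> n" and wS: "w \<in> Fib_words n k" and h: "homog_transp w i0 j0"
    and eq: "swap_pos w i0 j0 = gamma n k"
    and least: "\<forall>b. homog_transp w i0 b \<and> swap_pos w i0 b \<in> Fib_words n k \<and> b < j0 \<longrightarrow> swap_pos w i0 b \<in> set L"
    and wL: "w \<in> set L"
    and ab: "homog_transp (gamma n k) a b" and abS: "swap_pos (gamma n k) a b \<in> Fib_words n k"
  shows "swap_pos (gamma n k) a b \<in> set L"
proof -
  define z where "z = n - 2*k"
  define g where "g = gamma n k"
  have nz: "n = z + 2*k" using nk z_def by simp
  have gn: "\<And>x. x < n \<Longrightarrow> g!x = (z \<le> x \<and> odd (x - z))" using gamma_nth[OF nk] z_def g_def by simp
  have lg: "length g = n" using length_gamma[OF nk] g_def by simp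
  have ln: "length w = n" and fibw: "\<And>x. Suc x < n \<Longrightarrow> \<not>(w!x \<and> w!Suc x)" using FibD[OF wS] by auto
  have hh: "i0 < n" "j0 < n" "w ! i0" "\<not> w ! j0" "\<And>m. min i0 j0 < m \<and> m < max i0 j0 \<Longrightarrow> \<not> w ! m"
    using h ln unfolding homog_transp_def by auto
  have ij: "i0 \<noteq> j0" using hh by auto
  have geq: "\<And>x. x < n \<Longrightarrow> g!x = (if x = j0 then w!i0 else if x = i0 then w!j0 else w!x)"
    using swap_nth[of i0 w j0] hh ln eq g_def by simp
  have gj0: "g!j0" using geq[of j0] hh by simp
  have gi0: "\<not> g!i0" using geq[of i0] hh ij by simp
  have wg: "\<And>x. x < n \<Longrightarrow> x \<noteq> i0 \<Longrightarrow> x \<noteq> j0 \<Longrightarrow> w!x = g!x" using geq by simp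
  have step1: "i0 < Suc z \<and> j0 = Suc z"
  proof (cases "z \<le> i0")
    case True
    then have ev: "even (i0 - z)" using gn[of i0] gi0 hh by simp
    have s: "Suc i0 < n" using ev True hh(1) nz by presburger
    have gs: "g ! Suc i0" using gn[of "Suc i0"] s ev True by (simp add: Suc_diff_le)
    have j: "j0 = Suc i0"
    proof (rule ccontr)
      assume "j0 \<noteq> Suc i0"
      then have "w ! Suc i0" using wg[of "Suc i0"] gs s by simp
      then show False using fibw[OF s] hh(3) by simp
    qed
    have "i0 = z"
    proof (rule ccontr)
      assume "i0 \<noteq> z"
      then have i2: "z + 2 \<le> i0" using ev True by presburger
      have p: "i0 - 1 < n" "z \<le> i0 - 1" "odd (i0 - 1 - z)" using i2 ev hh(1) by presburger+
      have "g ! (i0 - 1)" using gn[OF p(1)] p by simp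
      then have "w ! (i0 - 1)" using wg[of "i0 - 1"] p j i2 by simp
      moreover have "Suc (i0 - 1) = i0" using i2 by simp
      ultimately show False using fibw[of "i0 - 1"] hh(1,3) by simp
    qed
    then show ?thesis using j by simp
  next
    case False
    have "z \<le> j0" "odd (j0 - z)" using gn[of j0] gj0 hh by auto
    then have "Suc z \<le> j0" by presburger
    have "j0 = Suc z"
    proof (rule ccontr)
      assume "j0 \<noteq> Suc z"
      then have lt: "Suc z < j0" using \<open>Suc z \<le> j0\<close> by simp
      have "w ! Suc z" using wg[of "Suc z"] gn[of "Suc z"] lt hh False by simp
      moreover have "min i0 j0 < Suc z \<and> Suc z < max i0 j0" using lt False by simp
      ultimately show False using hh(5) by blast
    qed
    then show ?thesis using False by simp
  qed
  have i0z: "i0 < Suc z" and j0z: "j0 = Suc z" using step1 by auto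
  have gg: "a < n" "b < n" "g ! a" "\<not> g ! b" "\<And>m. min a b < m \<and> m < max a b \<Longrightarrow> \<not> g ! m"
    using ab lg unfolding homog_transp_def g_def by auto
  have abne: "a \<noteq> b" using gg by auto
  define s where "s = swap_pos g a b"
  have fibS: "\<And>x. Suc x < n \<Longrightarrow> \<not>(s!x \<and> s!Suc x)" using FibD[OF abS] s_def g_def by auto
  have snth: "\<And>x. x < n \<Longrightarrow> s!x = (if x = b then True else if x = a then False else g!x)"
    using swap_nth[of a g b] gg lg s_def by simp
  have a1: "z \<le> a" "odd (a - z)" using gn[of a] gg by auto
  have "s \<in> set L"
  proof (cases "a = Suc z")
    case True
    have "b < a"
    proof (rule ccontr)
      assume "\<not> b < a" then have ba: "a < b" using abne by simp
      have evb: "even (b - z)" using gn[of b] gg ba True by simp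
      have b2: "Suc (Suc z) \<le> b" using evb ba True by presburger
      have s3: "Suc (Suc (Suc z)) < n" using evb b2 gg(2) nz by presburger
      have g3: "g ! Suc (Suc (Suc z))" using gn[OF s3] by simp
      show False
      proof (cases "b = Suc (Suc z)")
        case True
        then have "s ! Suc (Suc z) \<and> s ! Suc (Suc (Suc z))" using snth[of "Suc (Suc z)"] snth[of "Suc (Suc (Suc z))"] s3 g3 \<open>a = Suc z\<close> by simp
        then show False using fibS[OF s3] by blast
      next
        case False
        moreover have "b \<noteq> Suc (Suc (Suc z))" using g3 gg(4) by auto
        ultimately have "Suc (Suc (Suc z)) < b" using b2 by arith
        then have "min a b < Suc (Suc (Suc z)) \<and> Suc (Suc (Suc z)) < max a b" using ba \<open>a = Suc z\<close> by simp
        then show False using gg(5) g3 by blast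
      qed
    qed
    then have bz: "b \<le> z" using True by simp
    show ?thesis
    proof (cases "b = i0")
      case True
      have "s = w"
      proof (rule nth_equalityI)
        show "length s = length w" using s_def lg ln by simp
        fix x assume "x < length s"
        then have x: "x < n" using s_def lg by simp
        show "s ! x = w ! x" using snth[OF x] wg[OF x] hh \<open>a = Suc z\<close> j0z True by auto
      qed
      then show ?thesis using wL by simp
    next
      case False
      have wb: "\<not> w ! b" using wg[of b] gg gn[of b] bz False j0z by auto
      have hw: "homog_transp w i0 b"
        unfolding homog_transp_def
      proof (intro conjI allI impI)
        show "i0 < length w" "b < length w" "w ! i0" "\<not> w ! b" using hh ln gg wb by auto
        fix m assume m: "min i0 b < m \<and> m < max i0 b"
        then have "m < z" "m \<noteq> i0" "m \<noteq> j0" using i0z bz j0z by auto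
        then show "\<not> w ! m" using wg[of m] gn[of m] nz by auto
      qed
      have eqs: "swap_pos w i0 b = s"
      proof (rule nth_equalityI)
        show "length (swap_pos w i0 b) = length s" using s_def lg ln by simp
        fix x assume "x < length (swap_pos w i0 b)"
        then have x: "x < n" using ln by simp
        have sw: "swap_pos w i0 b ! x = (if x = b then w!i0 else if x = i0 then w!b else w!x)"
          using swap_nth[of i0 w b x] hh ln gg x by simp
        show "swap_pos w i0 b ! x = s ! x"
          unfolding sw snth[OF x] using wg[OF x] hh wb gi0 \<open>a = Suc z\<close> j0z False gg by auto
      qed
      have "swap_pos w i0 b \<in> set L" using least hw abS eqs s_def g_def bz j0z by auto
      then show ?thesis using eqs by simp
    qed
  next
    case False
    then have a3: "Suc (Suc (Suc z)) \<le> a" using a1 by presburger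
    have p2: "a - 2 < n" "z \<le> a - 2" "odd (a - 2 - z)" using a3 a1 gg(1) by presburger+
    have ga2: "g ! (a - 2)" using gn[OF p2(1)] p2 by simp
    have "b < a \<or> a < b" using abne by arith
    then show ?thesis
    proof
      assume ba: "b < a"
      show ?thesis
      proof (cases "b = a - 1")
        case True
        have "s ! (a - 2) \<and> s ! Suc (a - 2)" using snth[of "a - 2"] snth[of "a - 1"] gg ga2 True a3 p2
          by (simp add: Suc_diff_Suc numeral_2_eq_2)
        moreover have "Suc (a - 2) < n" using gg a3 by simp
        ultimately show ?thesis using fibS by blast
      next
        case False
        moreover have "b \<noteq> a - 2" using ga2 gg(4) by auto
        ultimately have "b < a - 2" using ba a3 by arith
        then have "min a b < a - 2 \<and> a - 2 < max a b" using ba a3 by simp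
        then show ?thesis using gg(5) ga2 by blast
      qed
    next
      assume ab2: "a < b"
      have evb: "even (b - z)" using gn[of b] gg ab2 a1 by simp
      have s2: "a + 2 < n" using evb a1 ab2 gg(2) nz by presburger
      have g2: "g ! (a + 2)" using gn[OF s2] a1 by presburger
      show ?thesis
      proof (cases "b = Suc a")
        case True
        have "s ! Suc a \<and> s ! Suc (Suc a)" using snth[of "Suc a"] snth[of "Suc (Suc a)"] s2 g2 True by simp
        moreover have "Suc (Suc a) < n" using s2 by simp
        ultimately show ?thesis using fibS by blast
      next
        case False
        moreover have "b \<noteq> a + 2" using g2 gg(4) by auto
        ultimately have "a + 2 < b" using ab2 by arith
        then have "min a b < a + 2 \<and> a + 2 < max a b" using ab2 by simp
        then show ?thesis using gg(5) g2 by blast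
      qed
    qed
  qed
  then show ?thesis using s_def g_def by simp
qed


definition INV :: "nat \<Rightarrow> nat \<Rightarrow> bool list list \<Rightarrow> bool" where
  "INV n k L \<longleftrightarrow> L \<noteq> [] \<and> distinct L \<and> set L \<subseteq> Fib_words n k \<and>
     (last L \<noteq> gamma n k \<longrightarrow> (\<forall>s\<in>set L. tr s \<le> tr (last L))) \<and>
     (last L = gamma n k \<longrightarrow> greedy_cands (Fib_words n k) L = {})"

lemma cands_exist:
  assumes nk: "2*k \<le> n" and I: "INV n k L" and lg: "last L \<noteq> gamma n k"
  shows "\<exists>i q. (i, q) \<in> greedy_cands (Fib_words n k) L \<and>
    (\<forall>i0 j0. (i0, j0) \<in> greedy_cands (Fib_words n k) L \<and> i0 \<le> i \<longrightarrow> tr (last L) \<le> tr (swap_pos (last L) i0 j0))"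
proof -
  have lS: "last L \<in> Fib_words n k" using I last_in_set unfolding INV_def by blast
  obtain i q where iq: "homog_transp (last L) i q" "swap_pos (last L) i q \<in> Fib_words n k"
    "tr (last L) < tr (swap_pos (last L) i q)"
    "\<forall>i0 j0. homog_transp (last L) i0 j0 \<and> swap_pos (last L) i0 j0 \<in> Fib_words n k \<and> i0 \<le> i \<longrightarrow> tr (last L) \<le> tr (swap_pos (last L) i0 j0)"
    using up_exists[OF nk lS lg] by blast
  have "swap_pos (last L) i q \<notin> set L"
  proof
    assume "swap_pos (last L) i q \<in> set L"
    then have "tr (swap_pos (last L) i q) \<le> tr (last L)" using I lg unfolding INV_def by auto
    then show False using iq(3) by simp
  qed
  then have "(i, q) \<in> greedy_cands (Fib_words n k) L" using iq unfolding greedy_cands_def by simp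
  moreover have "\<forall>i0 j0. (i0, j0) \<in> greedy_cands (Fib_words n k) L \<and> i0 \<le> i \<longrightarrow> tr (last L) \<le> tr (swap_pos (last L) i0 j0)"
    using iq(4) unfolding greedy_cands_def by auto
  ultimately show ?thesis by blast
qed

lemma INV_step:
  assumes nk: "2*k \<le> n" and I: "INV n k L" and nx: "greedy_next (Fib_words n k) L = Some w'"
  shows "INV n k (L @ [w'])"
proof -
  define C where "C = greedy_cands (Fib_words n k) L"
  have lg: "last L \<noteq> gamma n k"
  proof
    assume "last L = gamma n k"
    then have "C = {}" using I unfolding INV_def C_def by auto
    then show False using nx unfolding greedy_next_def C_def by simp
  qed
  obtain i q where iq: "(i, q) \<in> C" and mono: "\<forall>i0 j0. (i0, j0) \<in> C \<and> i0 \<le> i \<longrightarrow> tr (last L) \<le> tr (swap_pos (last L) i0 j0)"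
    using cands_exist[OF nk I lg] unfolding C_def by blast
  define i0 where "i0 = (LEAST i. \<exists>j. (i, j) \<in> C)"
  define j0 where "j0 = (LEAST j. (i0, j) \<in> C)"
  have ex0: "\<exists>j. (i0, j) \<in> C"
  proof -
    have "\<exists>i. \<exists>j. (i, j) \<in> C" using iq by blast
    then show ?thesis unfolding i0_def by (rule LeastI_ex)
  qed
  have c0: "(i0, j0) \<in> C" unfolding j0_def using ex0 by (rule LeastI_ex)
  have i0i: "i0 \<le> i" unfolding i0_def using iq by (blast intro: Least_le)
  have j0le: "\<And>b. (i0, b) \<in> C \<Longrightarrow> j0 \<le> b" unfolding j0_def by (rule Least_le)
  have Cne: "C \<noteq> {}" using iq by auto
  have w': "w' = swap_pos (last L) i0 j0" using nx Cne unfolding greedy_next_def C_def[symmetric] i0_def j0_def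
    by (simp add: Let_def)
  have c0': "homog_transp (last L) i0 j0" "w' \<in> Fib_words n k" "w' \<notin> set L"
    using c0 w' unfolding C_def greedy_cands_def by auto
  have trm: "tr (last L) \<le> tr w'" using mono c0 i0i w' by blast
  have base: "L @ [w'] \<noteq> [] \<and> distinct (L @ [w']) \<and> set (L @ [w']) \<subseteq> Fib_words n k"
    using I c0' unfolding INV_def by auto
  show ?thesis
  proof (cases "w' = gamma n k")
    case False
    have "\<forall>s\<in>set (L @ [w']). tr s \<le> tr w'" using I lg trm unfolding INV_def by fastforce
    then show ?thesis using base False unfolding INV_def by simp
  next
    case True
    have lS: "last L \<in> Fib_words n k" using I last_in_set unfolding INV_def by blast
    have least: "\<forall>b. homog_transp (last L) i0 b \<and> swap_pos (last L) i0 b \<in> Fib_words n k \<and> b < j0 \<longrightarrow> swap_pos (last L) i0 b \<in> set L"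
    proof (intro allI impI)
      fix b assume b: "homog_transp (last L) i0 b \<and> swap_pos (last L) i0 b \<in> Fib_words n k \<and> b < j0"
      show "swap_pos (last L) i0 b \<in> set L"
      proof (rule ccontr)
        assume "swap_pos (last L) i0 b \<notin> set L"
        then have "(i0, b) \<in> C" using b unfolding C_def greedy_cands_def by simp
        then show False using j0le b by fastforce
      qed
    qed
    have lL: "last L \<in> set L" using I unfolding INV_def by auto
    have "greedy_cands (Fib_words n k) (L @ [w']) = {}"
    proof (rule ccontr)
      assume "greedy_cands (Fib_words n k) (L @ [w']) \<noteq> {}"
      then obtain a b where ab: "(a, b) \<in> greedy_cands (Fib_words n k) (L @ [w'])" by auto
      then have ab': "homog_transp (gamma n k) a b" "swap_pos (gamma n k) a b \<in> Fib_words n k"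
        "swap_pos (gamma n k) a b \<notin> set (L @ [w'])"
        using True unfolding greedy_cands_def by auto
      have "swap_pos (gamma n k) a b \<in> set L"
        using gamma_end[OF nk lS c0'(1) _ least lL ab'(1,2)] w' True by simp
      then show False using ab'(3) by simp
    qed
    then show ?thesis using base True unfolding INV_def by simp
  qed
qed

lemma run_aux:
  assumes nk: "2*k \<le> n"
  shows "INV n k L \<Longrightarrow> card (Fib_words n k) < length L + f \<Longrightarrow> last (greedy_aux f (Fib_words n k) L) = gamma n k"
proof (induction f arbitrary: L)
  case 0
  have "length L = card (set L)" using 0(1) unfolding INV_def by (simp add: distinct_card)
  also have "\<dots> \<le> card (Fib_words n k)" using 0(1) finite_Fib unfolding INV_def by (simp add: card_mono)
  finally show ?case using 0(2) by simp
next
  case (Suc f)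
  show ?case
  proof (cases "greedy_next (Fib_words n k) L")
    case None
    have "last L = gamma n k"
    proof (rule ccontr)
      assume "last L \<noteq> gamma n k"
      then obtain i q where "(i, q) \<in> greedy_cands (Fib_words n k) L" using cands_exist[OF nk Suc(2)] by blast
      then show False using None unfolding greedy_next_def by (auto simp: Let_def split: if_splits)
    qed
    then show ?thesis using None by simp
  next
    case (Some w')
    have "INV n k (L @ [w'])" using INV_step[OF nk Suc(2) Some] .
    then show ?thesis using Suc.IH[of "L @ [w']"] Suc(3) Some by simp
  qed
qed

theorem lemma1:
  fixes n k :: nat and \<alpha> :: "bool list"
  assumes "2 * k \<le> n"
    and "\<alpha> \<in> Fib_words n k"
    and "\<alpha> \<noteq> gamma n k"
  shows "last (F_list n k \<alpha>) = gamma n k"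
proof -
  have "INV n k [\<alpha>]" using assms unfolding INV_def by simp
  then show ?thesis unfolding F_list_def greedy_def using run_aux[OF assms(1)] by simp
qed


end
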